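(* Let $\Bbbk$ be an algebraically closed field of characteristic zero, $G$ a finite abelian group, $u\in G$ an element of order $2$, and $V$ a finite-dimensional $\Bbbk G$-module with $u\cdot v=-v$ for all $v\in V$. Let $\mathcal{A}=\mathcal{A}(V,u,G)$ be the finite supergroup algebra. Then the algebra map $\phi:\mathcal{A}\to\mathcal{A}^{\mathrm{cop}}$ determined by $\phi(v)=vu$ for $v\in V$ and $\phi(g)=g$ for $g\in G$ is a Hopf algebra isomorphism.
   Context: The finite supergroup algebra $\mathcal{A}(V,u,G)$ is the Hopf algebra $\wedge(V)\# \Bbbk G$: as an algebra it is generated by the elements of $V$ (linearly) and of $G$, subject to the group relations of $G$ and to $vw+wv=0$ and $gv=(g\cdot v)g$ for $v,w\in V$, $g\in G$; its coproduct, counit and antipode are determined by $\Delta(v)=v\otimes 1+u\otimes v$, $\Delta(g)=g\otimes g$, $\varepsilon(v)=0$, $\varepsilon(g)=1$, $S(v)=-uv$, $S(g)=g^{-1}$. $\mathcal{A}^{\mathrm{cop}}$ denotes the same algebra with opposite coproduct. *)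

theory Defs
  imports "HOL-Computational_Algebra.Polynomial"
begin

definition alg_closed_type :: "'k::field itself \<Rightarrow> bool" where
  "alg_closed_type _ \<longleftrightarrow> (\<forall>p::'k poly. degree p > 0 \<longrightarrow> (\<exists>x. poly p x = 0))"

text \<open>V = k^n with basis e_0..e_(n-1); a G-module structure is a matrix representation
  rho: g . e_i = sum_j rho g j i e_j.  G is a finite abelian group written additively.\<close>
definition is_rep :: "nat \<Rightarrow> ('g::ab_group_add \<Rightarrow> nat \<Rightarrow> nat \<Rightarrow> 'k::comm_ring_1) \<Rightarrow> bool" where
  "is_rep n \<rho> \<longleftrightarrow>
     (\<forall>i<n. \<forall>j<n. \<rho> 0 i j = (if i = j then 1 else 0)) \<and>
     (\<forall>g h. \<forall>i<n. \<forall>j<n. \<rho> (g + h) i j = (\<Sum>l<n. \<rho> g i l * \<rho> h l j))"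

text \<open>Exterior algebra of V: coefficient functions on the basis e_S, S \<subseteq> {..<n},
  e_S = e_(i1) \<wedge> ... \<wedge> e_(ik) with i1 < ... < ik.\<close>
definition ext_sign :: "nat set \<Rightarrow> nat set \<Rightarrow> 'k::comm_ring_1" where
  "ext_sign S T = (if S \<inter> T = {} then (-1) ^ card {(i,j). i \<in> S \<and> j \<in> T \<and> j < i} else 0)"

definition ext_basis :: "nat set \<Rightarrow> nat set \<Rightarrow> 'k::zero_neq_one" where
  "ext_basis S = (\<lambda>R. if R = S then 1 else 0)"

definition ext_wedge :: "nat \<Rightarrow> (nat set \<Rightarrow> 'k) \<Rightarrow> (nat set \<Rightarrow> 'k) \<Rightarrow> nat set \<Rightarrow> 'k::comm_ring_1" where
  "ext_wedge n x y = (\<lambda>R. \<Sum>S\<in>Pow {..<n}. \<Sum>T\<in>Pow {..<n}.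
      if S \<union> T = R then x S * y T * ext_sign S T else 0)"

definition ext_gen_act :: "nat \<Rightarrow> ('g \<Rightarrow> nat \<Rightarrow> nat \<Rightarrow> 'k::comm_ring_1) \<Rightarrow> 'g \<Rightarrow> nat \<Rightarrow> nat set \<Rightarrow> 'k" where
  "ext_gen_act n \<rho> g i = (\<lambda>R. \<Sum>j<n. \<rho> g j i * ext_basis {j} R)"

definition ext_act_basis :: "nat \<Rightarrow> ('g \<Rightarrow> nat \<Rightarrow> nat \<Rightarrow> 'k::comm_ring_1) \<Rightarrow> 'g \<Rightarrow> nat set \<Rightarrow> nat set \<Rightarrow> 'k" where
  "ext_act_basis n \<rho> g S =
     foldr (\<lambda>i acc. ext_wedge n (ext_gen_act n \<rho> g i) acc) (sorted_list_of_set S) (ext_basis {})"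

text \<open>The smash product A = \<wedge>(V) # kG: an element is a coefficient function a S g on the
  basis e_S g (S \<subseteq> {..<n}, g \<in> G).\<close>
definition sa_carrier :: "nat \<Rightarrow> (nat set \<Rightarrow> 'g \<Rightarrow> 'k::zero) set" where
  "sa_carrier n = {a. \<forall>S g. \<not> S \<subseteq> {..<n} \<longrightarrow> a S g = 0}"

definition sa_basis :: "nat set \<Rightarrow> 'g \<Rightarrow> nat set \<Rightarrow> 'g \<Rightarrow> 'k::zero_neq_one" where
  "sa_basis S g = (\<lambda>R h. if R = S \<and> h = g then 1 else 0)"

definition sa_add :: "(nat set \<Rightarrow> 'g \<Rightarrow> 'k::plus) \<Rightarrow> (nat set \<Rightarrow> 'g \<Rightarrow> 'k) \<Rightarrow> nat set \<Rightarrow> 'g \<Rightarrow> 'k" where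
  "sa_add a b = (\<lambda>S g. a S g + b S g)"

definition sa_smul :: "'k::times \<Rightarrow> (nat set \<Rightarrow> 'g \<Rightarrow> 'k) \<Rightarrow> nat set \<Rightarrow> 'g \<Rightarrow> 'k" where
  "sa_smul c a = (\<lambda>S g. c * a S g)"

text \<open>(x # g)(y # h) = x (g . y) # (g h)\<close>
definition sa_mul :: "nat \<Rightarrow> ('g::{ab_group_add,finite} \<Rightarrow> nat \<Rightarrow> nat \<Rightarrow> 'k::comm_ring_1)
     \<Rightarrow> (nat set \<Rightarrow> 'g \<Rightarrow> 'k) \<Rightarrow> (nat set \<Rightarrow> 'g \<Rightarrow> 'k) \<Rightarrow> nat set \<Rightarrow> 'g \<Rightarrow> 'k" where
  "sa_mul n \<rho> a b = (\<lambda>R k. \<Sum>S\<in>Pow {..<n}. \<Sum>g\<in>UNIV. \<Sum>T\<in>Pow {..<n}. \<Sum>h\<in>UNIV.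
      if g + h = k then a S g * b T h * ext_wedge n (ext_basis S) (ext_act_basis n \<rho> g T) R else 0)"

definition sa_one :: "nat set \<Rightarrow> 'g::zero \<Rightarrow> 'k::zero_neq_one" where
  "sa_one = sa_basis {} 0"

definition sa_vec :: "nat \<Rightarrow> (nat \<Rightarrow> 'k::comm_ring_1) \<Rightarrow> nat set \<Rightarrow> 'g::zero \<Rightarrow> 'k" where
  "sa_vec n x = (\<lambda>S g. if g = 0 then (\<Sum>i<n. x i * ext_basis {i} S) else 0)"

definition sa_grp :: "'g \<Rightarrow> nat set \<Rightarrow> 'g \<Rightarrow> 'k::zero_neq_one" where
  "sa_grp g = sa_basis {} g"

definition sa_alg_hom :: "nat \<Rightarrow> ('g::{ab_group_add,finite} \<Rightarrow> nat \<Rightarrow> nat \<Rightarrow> 'k::comm_ring_1)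
     \<Rightarrow> ((nat set \<Rightarrow> 'g \<Rightarrow> 'k) \<Rightarrow> (nat set \<Rightarrow> 'g \<Rightarrow> 'k)) \<Rightarrow> bool" where
  "sa_alg_hom n \<rho> \<phi> \<longleftrightarrow>
     (\<forall>a\<in>sa_carrier n. \<phi> a \<in> sa_carrier n) \<and>
     (\<forall>a\<in>sa_carrier n. \<forall>b\<in>sa_carrier n. \<phi> (sa_add a b) = sa_add (\<phi> a) (\<phi> b)) \<and>
     (\<forall>c. \<forall>a\<in>sa_carrier n. \<phi> (sa_smul c a) = sa_smul c (\<phi> a)) \<and>
     (\<forall>a\<in>sa_carrier n. \<forall>b\<in>sa_carrier n. \<phi> (sa_mul n \<rho> a b) = sa_mul n \<rho> (\<phi> a) (\<phi> b)) \<and>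
     \<phi> sa_one = sa_one"

text \<open>A \<otimes> A: coefficient functions on pairs of basis elements.\<close>
definition sa_tensor :: "(nat set \<Rightarrow> 'g \<Rightarrow> 'k::times) \<Rightarrow> (nat set \<Rightarrow> 'g \<Rightarrow> 'k) \<Rightarrow> nat set \<Rightarrow> 'g \<Rightarrow> nat set \<Rightarrow> 'g \<Rightarrow> 'k" where
  "sa_tensor a b = (\<lambda>S g T h. a S g * b T h)"

text \<open>(a \<otimes> b)(c \<otimes> d) = ac \<otimes> bd, extended bilinearly\<close>
definition sa2_mul :: "nat \<Rightarrow> ('g::{ab_group_add,finite} \<Rightarrow> nat \<Rightarrow> nat \<Rightarrow> 'k::comm_ring_1)
     \<Rightarrow> (nat set \<Rightarrow> 'g \<Rightarrow> nat set \<Rightarrow> 'g \<Rightarrow> 'k) \<Rightarrow> (nat set \<Rightarrow> 'g \<Rightarrow> nat set \<Rightarrow> 'g \<Rightarrow> 'k)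
     \<Rightarrow> nat set \<Rightarrow> 'g \<Rightarrow> nat set \<Rightarrow> 'g \<Rightarrow> 'k" where
  "sa2_mul n \<rho> X Y = (\<lambda>S1 g1 S2 g2.
     \<Sum>P1\<in>Pow {..<n}. \<Sum>p1\<in>UNIV. \<Sum>P2\<in>Pow {..<n}. \<Sum>p2\<in>UNIV.
     \<Sum>Q1\<in>Pow {..<n}. \<Sum>q1\<in>UNIV. \<Sum>Q2\<in>Pow {..<n}. \<Sum>q2\<in>UNIV.
       X P1 p1 P2 p2 * Y Q1 q1 Q2 q2
       * sa_mul n \<rho> (sa_basis P1 p1) (sa_basis Q1 q1) S1 g1
       * sa_mul n \<rho> (sa_basis P2 p2) (sa_basis Q2 q2) S2 g2)"

definition sa_Delta_gen :: "nat \<Rightarrow> 'g::{ab_group_add,finite} \<Rightarrow> nat \<Rightarrow> nat set \<Rightarrow> 'g \<Rightarrow> nat set \<Rightarrow> 'g \<Rightarrow> 'k::comm_ring_1" where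
  "sa_Delta_gen n u i = (\<lambda>S1 g1 S2 g2.
     sa_tensor (sa_vec n (\<lambda>j. if j = i then 1 else 0)) sa_one S1 g1 S2 g2
     + sa_tensor (sa_grp u) (sa_vec n (\<lambda>j. if j = i then 1 else 0)) S1 g1 S2 g2)"

text \<open>Delta(e_S g) = Delta(e_(i1)) ... Delta(e_(ik)) (g \<otimes> g)  (Delta is an algebra map)\<close>
definition sa_Delta_basis :: "nat \<Rightarrow> ('g::{ab_group_add,finite} \<Rightarrow> nat \<Rightarrow> nat \<Rightarrow> 'k::comm_ring_1) \<Rightarrow> 'g
     \<Rightarrow> nat set \<Rightarrow> 'g \<Rightarrow> nat set \<Rightarrow> 'g \<Rightarrow> nat set \<Rightarrow> 'g \<Rightarrow> 'k" where
  "sa_Delta_basis n \<rho> u S g =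
     sa2_mul n \<rho>
       (foldr (\<lambda>i acc. sa2_mul n \<rho> (sa_Delta_gen n u i) acc) (sorted_list_of_set S) (sa_tensor sa_one sa_one))
       (sa_tensor (sa_grp g) (sa_grp g))"

definition sa_Delta :: "nat \<Rightarrow> ('g::{ab_group_add,finite} \<Rightarrow> nat \<Rightarrow> nat \<Rightarrow> 'k::comm_ring_1) \<Rightarrow> 'g
     \<Rightarrow> (nat set \<Rightarrow> 'g \<Rightarrow> 'k) \<Rightarrow> nat set \<Rightarrow> 'g \<Rightarrow> nat set \<Rightarrow> 'g \<Rightarrow> 'k" where
  "sa_Delta n \<rho> u a = (\<lambda>S1 g1 S2 g2. \<Sum>S\<in>Pow {..<n}. \<Sum>g\<in>UNIV. a S g * sa_Delta_basis n \<rho> u S g S1 g1 S2 g2)"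

definition sa_Delta_cop :: "nat \<Rightarrow> ('g::{ab_group_add,finite} \<Rightarrow> nat \<Rightarrow> nat \<Rightarrow> 'k::comm_ring_1) \<Rightarrow> 'g
     \<Rightarrow> (nat set \<Rightarrow> 'g \<Rightarrow> 'k) \<Rightarrow> nat set \<Rightarrow> 'g \<Rightarrow> nat set \<Rightarrow> 'g \<Rightarrow> 'k" where
  "sa_Delta_cop n \<rho> u a = (\<lambda>S1 g1 S2 g2. sa_Delta n \<rho> u a S2 g2 S1 g1)"

definition sa_eps :: "(nat set \<Rightarrow> 'g::finite \<Rightarrow> 'k::comm_ring_1) \<Rightarrow> 'k" where
  "sa_eps a = (\<Sum>g\<in>UNIV. a {} g)"

definition sa_map2 :: "nat \<Rightarrow> ((nat set \<Rightarrow> 'g::finite \<Rightarrow> 'k::comm_ring_1) \<Rightarrow> (nat set \<Rightarrow> 'g \<Rightarrow> 'k))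
     \<Rightarrow> (nat set \<Rightarrow> 'g \<Rightarrow> nat set \<Rightarrow> 'g \<Rightarrow> 'k) \<Rightarrow> nat set \<Rightarrow> 'g \<Rightarrow> nat set \<Rightarrow> 'g \<Rightarrow> 'k" where
  "sa_map2 n \<phi> X = (\<lambda>S1 g1 S2 g2. \<Sum>P\<in>Pow {..<n}. \<Sum>p\<in>UNIV. \<Sum>Q\<in>Pow {..<n}. \<Sum>q\<in>UNIV.
      X P p Q q * \<phi> (sa_basis P p) S1 g1 * \<phi> (sa_basis Q q) S2 g2)"

end

theory Submission
  imports Defs
begin

lemma sum_single:
  assumes "finite A" "x \<in> A" "\<And>y. y \<in> A \<Longrightarrow> y \<noteq> x \<Longrightarrow> f y = 0"
  shows "sum f A = f x"
proof -
  have "sum f A = f x + sum f (A - {x})" using assms by (simp add: sum.remove)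
  also have "sum f (A - {x}) = 0" using assms by (intro sum.neutral) auto
  finally show ?thesis by simp
qed

lemma sign_empty_l[simp]: "ext_sign {} B = 1" by (simp add: ext_sign_def)
lemma sign_empty_r[simp]: "ext_sign A {} = 1" by (simp add: ext_sign_def)
lemma sign_nz_disj: "ext_sign A B \<noteq> 0 \<Longrightarrow> A \<inter> B = {}" by (auto simp: ext_sign_def split: if_splits)

lemma wedge_basis_left:
  "ext_wedge n (ext_basis S) y R = (if S \<subseteq> {..<n} then (\<Sum>T\<in>Pow {..<n}. if S \<union> T = R then y T * ext_sign S T else 0) else 0)"
proof -
  have "ext_wedge n (ext_basis S) y R = (\<Sum>S'\<in>Pow {..<n}. if S' = S then (\<Sum>T\<in>Pow {..<n}. if S \<union> T = R then y T * ext_sign S T else 0) else 0)"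
    unfolding ext_wedge_def ext_basis_def
    by (rule sum.cong[OF refl]) (auto cong: if_cong)
  then show ?thesis by (simp add: sum.delta)
qed

lemma wedge_bb:
  "ext_wedge n (ext_basis S) (ext_basis T) = (\<lambda>R. if S \<subseteq> {..<n} \<and> T \<subseteq> {..<n} \<and> S \<union> T = R then (ext_sign S T :: 'a::comm_ring_1) else 0)"
proof (rule ext)
  fix R
  show "ext_wedge n (ext_basis S) (ext_basis T) R = (if S \<subseteq> {..<n} \<and> T \<subseteq> {..<n} \<and> S \<union> T = R then (ext_sign S T::'a) else 0)"
  proof (cases "S \<subseteq> {..<n}")
    case True
    have e1: "(\<Sum>T'\<in>Pow {..<n}. if S \<union> T' = R then ext_basis T T' * ext_sign S T' else 0)
       = (\<Sum>T'\<in>Pow {..<n}. if T' = T then (if S \<union> T = R then (ext_sign S T::'a) else 0) else 0)"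
      by (rule sum.cong) (auto simp: ext_basis_def)
    have e2: "ext_wedge n (ext_basis S) (ext_basis T) R = (\<Sum>T'\<in>Pow {..<n}. if S \<union> T' = R then ext_basis T T' * (ext_sign S T'::'a) else 0)"
      using True by (simp add: wedge_basis_left)
    have "ext_wedge n (ext_basis S) (ext_basis T) R = (if T \<subseteq> {..<n} then if S \<union> T = R then (ext_sign S T::'a) else 0 else 0)"
      unfolding e2 e1 by (simp add: sum.delta)
    then show ?thesis using True by (simp cong: if_cong)
  qed (simp add: wedge_basis_left)
qed

lemma wedge_scale_l: "ext_wedge n (\<lambda>R. c * x R) y = (\<lambda>R. c * ext_wedge n x y R)"
  unfolding ext_wedge_def by (auto simp: sum_distrib_left intro!: sum.cong ext)

lemma wedge_scale_r: "ext_wedge n x (\<lambda>R. c * y R) = (\<lambda>R. c * ext_wedge n x y R)"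
  unfolding ext_wedge_def by (auto simp: sum_distrib_left intro!: sum.cong ext)

lemma wedge_nz:
  fixes x y :: "nat set \<Rightarrow> 'a::comm_ring_1"
  assumes "ext_wedge n x y R \<noteq> 0"
  shows "\<exists>S T. S \<subseteq> {..<n} \<and> T \<subseteq> {..<n} \<and> S \<union> T = R \<and> S \<inter> T = {} \<and> x S \<noteq> 0 \<and> y T \<noteq> 0"
proof (rule ccontr)
  assume nt: "\<not> ?thesis"
  hence "ext_wedge n x y R = 0"
    unfolding ext_wedge_def
    apply (intro sum.neutral ballI)
    subgoal premises p for S T
    proof (cases "x S * y T * ext_sign S T = 0")
      case False
      then have "(ext_sign S T::'a) \<noteq> 0" "x S \<noteq> 0" "y T \<noteq> 0" by auto
      then show ?thesis using sign_nz_disj[of S T] nt p by auto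
    qed simp

    done
  with assms show False by simp
qed

lemma wedge_minus_l: "ext_wedge n (\<lambda>R. - x R) y = (\<lambda>R. - ext_wedge n x y R)"
  unfolding ext_wedge_def sum_negf[symmetric] by (intro ext sum.cong refl) auto

fun sgnf :: "nat \<Rightarrow> 'k::comm_ring_1" where
  "sgnf 0 = 1" | "sgnf (Suc m) = (-1) ^ m * sgnf m"

lemma sgnf_add: "(sgnf (a + b) :: 'k::comm_ring_1) = sgnf a * sgnf b * (-1) ^ (a * b)"
  by (induction b) (simp_all add: algebra_simps power_add)

lemma m1_sq: "((-1::'k::comm_ring_1) ^ m) * (-1) ^ m = 1"
  by (simp add: power_mult_distrib[symmetric])

lemma sgnf_sq: "(sgnf m :: 'k::comm_ring_1) * sgnf m = 1"
proof (induction m)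
  case (Suc m)
  have "(sgnf (Suc m) :: 'k) * sgnf (Suc m) = ((-1) ^ m * (-1) ^ m) * (sgnf m * sgnf m)"
    by (simp add: algebra_simps)
  then show ?case using Suc m1_sq[of m] by simp
qed simp

lemma shift: "(\<Sum>g\<in>(UNIV::'g::ab_group_add set). f g) = (\<Sum>g\<in>UNIV. f (g + c))"
  by (rule sum.reindex_bij_witness[where i="\<lambda>g. g + c" and j="\<lambda>g. g - c"]) auto

lemma shift4:
  "(\<Sum>S\<in>A. \<Sum>g\<in>(UNIV::'g::ab_group_add set). \<Sum>T\<in>B. \<Sum>h\<in>(UNIV::'g set). f S g T h)
   = (\<Sum>S\<in>A. \<Sum>g\<in>UNIV. \<Sum>T\<in>B. \<Sum>h\<in>UNIV. f S (g + c S) T (h + d T))"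
proof (rule sum.cong[OF refl])
  fix S
  have "(\<Sum>g\<in>(UNIV::'g set). \<Sum>T\<in>B. \<Sum>h\<in>(UNIV::'g set). f S g T h)
      = (\<Sum>g\<in>UNIV. \<Sum>T\<in>B. \<Sum>h\<in>(UNIV::'g set). f S (g + c S) T h)"
    by (rule shift)
  also have "\<dots> = (\<Sum>g\<in>UNIV. \<Sum>T\<in>B. \<Sum>h\<in>UNIV. f S (g + c S) T (h + d T))"
    by (intro sum.cong refl shift)
  finally show "(\<Sum>g\<in>(UNIV::'g set). \<Sum>T\<in>B. \<Sum>h\<in>(UNIV::'g set). f S g T h)
      = (\<Sum>g\<in>UNIV. \<Sum>T\<in>B. \<Sum>h\<in>UNIV. f S (g + c S) T (h + d T))" .
qed

lemma shift2:
  "(\<Sum>S\<in>A. \<Sum>g\<in>(UNIV::'g::ab_group_add set). f S g) = (\<Sum>S\<in>A. \<Sum>g\<in>UNIV. f S (g + c S))"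
  by (rule sum.cong[OF refl]) (rule shift)

lemma add_inv_iff: "(c::'g::ab_group_add) + c = 0 \<Longrightarrow> (x + c = k) = (x = k + c)"
  by (metis add.assoc add.right_neutral)

lemma sum2_delta:
  "finite A \<Longrightarrow> (\<Sum>T\<in>A. \<Sum>h\<in>(UNIV::'g::finite set). if T = Q \<and> h = q then f T h else 0) = (if Q \<in> A then f Q q else (0::'a::comm_monoid_add))"
proof -
  assume A: "finite A"
  have "(\<Sum>T\<in>A. \<Sum>h\<in>(UNIV::'g set). if T = Q \<and> h = q then f T h else 0)
      = (\<Sum>T\<in>A. if T = Q then f Q q else 0)"
    by (rule sum.cong[OF refl]) (simp add: sum.delta)
  also have "\<dots> = (if Q \<in> A then f Q q else 0)" using A by (simp add: sum.delta)
  finally show ?thesis .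
qed

definition prs :: "nat set \<Rightarrow> nat set \<Rightarrow> (nat \<times> nat) set" where
  "prs A B = {(i, j). i \<in> A \<and> j \<in> B \<and> j < i}"

lemma sign_prs: "(ext_sign A B :: 'k::comm_ring_1) = (if A \<inter> B = {} then (-1) ^ card (prs A B) else 0)"
  by (simp add: ext_sign_def prs_def)

lemma sign_insert_l:
  assumes "x \<notin> B" "\<forall>j\<in>B. x < j"
  shows "(ext_sign (insert x A) B :: 'k::comm_ring_1) = ext_sign A B"
proof -
  have "prs (insert x A) B = prs A B" using assms by (auto simp: prs_def)
  moreover have "(insert x A \<inter> B = {}) = (A \<inter> B = {})" using assms by auto
  ultimately show ?thesis by (simp add: sign_prs)
qed

lemma sign_insert_r:
  assumes "x \<notin> A" "x \<notin> B" "\<forall>i\<in>A. x < i" "finite A" "finite B"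
  shows "(ext_sign A (insert x B) :: 'k::comm_ring_1) = (-1) ^ card A * ext_sign A B"
proof -
  have e: "prs A (insert x B) = prs A B \<union> (A \<times> {x})" using assms by (auto simp: prs_def)
  have f: "finite (prs A B)" using assms
    by (rule_tac finite_subset[of _ "A \<times> B"]) (auto simp: prs_def)
  have d: "prs A B \<inter> (A \<times> {x}) = {}" using assms by (auto simp: prs_def)
  have "card (prs A (insert x B)) = card (prs A B) + card A"
    unfolding e using f d assms by (simp add: card_Un_disjoint card_cartesian_product)
  moreover have "(A \<inter> insert x B = {}) = (A \<inter> B = {})" using assms by auto
  ultimately show ?thesis by (simp add: sign_prs power_add algebra_simps)
qed

lemma sign_swap:
  assumes "A \<inter> B = {}" "finite A" "finite B"
  shows "(ext_sign A B :: 'k::comm_ring_1) * ext_sign B A = (-1) ^ (card A * card B)"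
proof -
  let ?Q = "{(i, j). i \<in> A \<and> j \<in> B \<and> i < j}"
  have e: "A \<times> B = prs A B \<union> ?Q" using assms by (auto simp: prs_def)
  have d: "prs A B \<inter> ?Q = {}" by (auto simp: prs_def)
  have fin: "finite (A \<times> B)" using assms by simp
  have im: "prs B A = (\<lambda>(i, j). (j, i)) ` ?Q" by (auto simp: prs_def image_iff)
  have "card (prs B A) = card ?Q" unfolding im by (rule card_image) (auto simp: inj_on_def)
  moreover have "card A * card B = card (prs A B) + card ?Q"
  proof -
    have "card A * card B = card (A \<times> B)" by (simp add: card_cartesian_product)
    also have "\<dots> = card (prs A B \<union> ?Q)" using e by simp
    also have "\<dots> = card (prs A B) + card ?Q" using e d fin by (intro card_Un_disjoint) auto
    finally show ?thesis .
  qed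
  ultimately show ?thesis using assms by (simp add: sign_prs power_add Int_commute)
qed

lemma m1_nz: "((-1::'k::comm_ring_1) ^ m) \<noteq> 0"
  using m1_sq[of m] by (metis mult_zero_left zero_neq_one)

lemma sign_nz_iff: "((ext_sign A B :: 'k::comm_ring_1) \<noteq> 0) = (A \<inter> B = {})"
  by (simp add: sign_prs m1_nz)

lemma sum_if_out: "(\<Sum>x\<in>A. if C then f x else 0) = (if C then sum f A else 0)"
  by (cases C) simp_all

lemma sign_swap2:
  assumes "A \<inter> B = {}" "finite A" "finite B"
  shows "(ext_sign A B :: 'k::comm_ring_1) = (-1) ^ (card A * card B) * ext_sign B A"
proof -
  have sq: "(ext_sign B A :: 'k) * ext_sign B A = 1"
    using assms m1_sq by (auto simp: sign_prs Int_commute)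
  have "(ext_sign A B :: 'k) = ext_sign A B * (ext_sign B A * ext_sign B A)" using sq by simp
  also have "\<dots> = ((ext_sign A B :: 'k) * ext_sign B A) * ext_sign B A" by (simp add: mult.assoc)
  also have "\<dots> = (-1) ^ (card A * card B) * (ext_sign B A :: 'k)" by (subst sign_swap[OF assms]) (rule refl)
  finally show ?thesis .
qed

lemma sa_basis_app: "sa_basis S g R h = (if R = S \<and> h = g then 1 else 0)" by (simp add: sa_basis_def)

locale SA =
  fixes \<rho> :: "'g::{ab_group_add,finite} \<Rightarrow> nat \<Rightarrow> nat \<Rightarrow> 'k::comm_ring_1"
    and u :: 'g and n :: nat
  assumes uu: "u + u = 0"
    and rep: "is_rep n \<rho>"
    and ru: "\<forall>i<n. \<forall>j<n. \<rho> u i j = (if i = j then -1 else 0)"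
begin

abbreviation F :: "'g \<Rightarrow> nat list \<Rightarrow> nat set \<Rightarrow> 'k" where
  "F g xs \<equiv> foldr (\<lambda>i acc. ext_wedge n (ext_gen_act n \<rho> g i) acc) xs (ext_basis {})"

lemma rho0: "i < n \<Longrightarrow> j < n \<Longrightarrow> \<rho> 0 i j = (if i = j then 1 else 0)"
  using rep by (simp add: is_rep_def)

lemma rhoadd: "i < n \<Longrightarrow> j < n \<Longrightarrow> \<rho> (g + h) i j = (\<Sum>l<n. \<rho> g i l * \<rho> h l j)"
  using rep by (simp add: is_rep_def)

lemma gen0: "i < n \<Longrightarrow> ext_gen_act n \<rho> 0 i = ext_basis {i}"
proof (rule ext)
  fix R assume i: "i < n"
  have "ext_gen_act n \<rho> 0 i R = (\<Sum>j<n. if j = i then ext_basis {j} R else 0)"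
    unfolding ext_gen_act_def using i by (intro sum.cong) (auto simp: rho0)
  also have "\<dots> = ext_basis {i} R" using i by (simp add: sum.delta)
  finally show "ext_gen_act n \<rho> 0 i R = ext_basis {i} R" .
qed

lemma genu: "i < n \<Longrightarrow> ext_gen_act n \<rho> (g + u) i = (\<lambda>R. - ext_gen_act n \<rho> g i R)"
proof (rule ext)
  fix R assume i: "i < n"
  have "\<rho> (g + u) j i = - \<rho> g j i" if j: "j < n" for j
  proof -
    have "\<rho> (g + u) j i = (\<Sum>l<n. \<rho> g j l * \<rho> u l i)" using i j by (simp add: rhoadd)
    also have "\<dots> = (\<Sum>l<n. if l = i then - \<rho> g j l else 0)"
      using i ru by (intro sum.cong) auto
    also have "\<dots> = - \<rho> g j i" using i by (simp add: sum.delta)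
    finally show ?thesis .
  qed
  then show "ext_gen_act n \<rho> (g + u) i R = - ext_gen_act n \<rho> g i R"
    unfolding ext_gen_act_def by (simp add: sum_negf[symmetric])
qed

lemma F_u: "set xs \<subseteq> {..<n} \<Longrightarrow> F (g + u) xs = (\<lambda>R. (-1) ^ length xs * F g xs R)"
proof (induction xs)
  case Nil then show ?case by simp
next
  case (Cons x xs)
  then have x: "x < n" by auto
  have "F (g + u) (x # xs) = ext_wedge n (\<lambda>R. - ext_gen_act n \<rho> g x R) (\<lambda>R. (-1) ^ length xs * F g xs R)"
    using Cons x by (simp add: genu)
  also have "\<dots> = (\<lambda>R. (-1) ^ length (x # xs) * F g (x # xs) R)"
    by (simp add: wedge_minus_l wedge_scale_r)
  finally show ?case .
qed

lemma F_0: "sorted xs \<Longrightarrow> distinct xs \<Longrightarrow> set xs \<subseteq> {..<n} \<Longrightarrow> F 0 xs = ext_basis (set xs)"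
proof (induction xs)
  case Nil then show ?case by simp
next
  case (Cons x xs)
  then have x: "x < n" and xs: "\<forall>y\<in>set xs. x < y" using le_neq_trans by auto
  have sgn: "ext_sign {x} (set xs) = (1::'k)"
  proof -
    have e: "{(i, j). i \<in> {x} \<and> j \<in> set xs \<and> j < i} = {}" using xs by auto
    have "{x} \<inter> set xs = {}" using xs by auto
    then show ?thesis unfolding ext_sign_def e by simp
  qed
  have "F 0 (x # xs) = ext_wedge n (ext_basis {x}) (ext_basis (set xs))"
    using Cons x by (simp add: gen0)
  also have "\<dots> = ext_basis (set (x # xs))"
    using Cons x sgn unfolding wedge_bb by (auto simp: ext_basis_def)
  finally show ?case .
qed

lemma gen_nz: "ext_gen_act n \<rho> g i R \<noteq> 0 \<Longrightarrow> \<exists>j<n. R = {j}"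
proof (rule ccontr)
  assume a: "ext_gen_act n \<rho> g i R \<noteq> 0" and b: "\<not> (\<exists>j<n. R = {j})"
  have "ext_gen_act n \<rho> g i R = 0" unfolding ext_gen_act_def
    using b by (intro sum.neutral) (auto simp: ext_basis_def)
  with a show False by simp
qed

lemma F_deg: "F g xs R \<noteq> 0 \<Longrightarrow> card R = length xs \<and> R \<subseteq> {..<n}"
proof (induction xs arbitrary: R)
  case Nil then show ?case by (auto simp: ext_basis_def split: if_splits)
next
  case (Cons x xs)
  from Cons.prems have "ext_wedge n (ext_gen_act n \<rho> g x) (F g xs) R \<noteq> 0" by simp
  from wedge_nz[OF this] obtain S T where
    ST: "S \<subseteq> {..<n}" "T \<subseteq> {..<n}" "S \<union> T = R" "S \<inter> T = {}"
        "ext_gen_act n \<rho> g x S \<noteq> 0" "F g xs T \<noteq> 0" by blast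
  from gen_nz[OF ST(5)] obtain j where j: "j < n" "S = {j}" by blast
  from Cons.IH[OF ST(6)] have "card T = length xs" by simp
  moreover have "finite T" using ST(2) finite_subset by blast
  ultimately have "card R = Suc (length xs)" using ST j by (auto simp: card_insert_if)
  then show ?case using ST by auto
qed

lemma act_F: "ext_act_basis n \<rho> g T = F g (sorted_list_of_set T)"
  by (simp add: ext_act_basis_def)

lemma act_deg: "T \<subseteq> {..<n} \<Longrightarrow> ext_act_basis n \<rho> g T R \<noteq> 0 \<Longrightarrow> card R = card T \<and> R \<subseteq> {..<n}"
  using F_deg[of g "sorted_list_of_set T" R] finite_subset[of T "{..<n}"]
  by (auto simp: act_F)

lemma act_u: "T \<subseteq> {..<n} \<Longrightarrow> ext_act_basis n \<rho> (g + u) T = (\<lambda>R. (-1) ^ card T * ext_act_basis n \<rho> g T R)"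
  using F_u[of "sorted_list_of_set T" g] finite_subset[of T "{..<n}"]
  by (auto simp: act_F)

lemma act_0: "T \<subseteq> {..<n} \<Longrightarrow> ext_act_basis n \<rho> 0 T = ext_basis T"
  using F_0[of "sorted_list_of_set T"] finite_subset[of T "{..<n}"]
  by (auto simp: act_F)

lemma act_uu: "T \<subseteq> {..<n} \<Longrightarrow> ext_act_basis n \<rho> u T = (\<lambda>R. (-1) ^ card T * ext_basis T R)"
  using act_u[of T 0] act_0[of T] by simp

lemma W_deg:
  assumes "S \<subseteq> {..<n}" "T \<subseteq> {..<n}" "ext_wedge n (ext_basis S) (ext_act_basis n \<rho> g T) R \<noteq> 0"
  shows "card R = card S + card T \<and> R \<subseteq> {..<n}"
proof -
  from wedge_nz[OF assms(3)] obtain S' T' where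
    ST: "S' \<subseteq> {..<n}" "T' \<subseteq> {..<n}" "S' \<union> T' = R" "S' \<inter> T' = {}"
        "ext_basis S S' \<noteq> (0::'k)" "ext_act_basis n \<rho> g T T' \<noteq> 0" by blast
  have "S' = S" using ST(5) by (auto simp: ext_basis_def split: if_splits)
  moreover have "card T' = card T" using act_deg[OF assms(2) ST(6)] by simp
  moreover have "finite S'" "finite T'" using ST(1,2) finite_subset by auto
  ultimately show ?thesis using ST card_Un_disjoint[of S' T'] by (auto simp flip: ST(3))
qed

definition w :: "nat \<Rightarrow> 'g" where "w m = (if even m then 0 else u)"

lemma w_add: "w (a + b) = w a + w b"
  using uu by (auto simp: w_def)

lemma ww: "g + w m + w m = g"
  using uu by (auto simp: w_def add.assoc)

lemma ww2: "w m + w m = 0"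
  using uu by (auto simp: w_def)

lemma w_Suc: "w (Suc m) = w m + u"
  using uu by (auto simp: w_def)

lemma act_w: "T \<subseteq> {..<n} \<Longrightarrow> ext_act_basis n \<rho> (g + w m) T = (\<lambda>R. (-1) ^ (m * card T) * ext_act_basis n \<rho> g T R)"
proof (cases "even m")
  case True
  then have "(-1::'k) ^ (m * card T) = 1" by simp
  then show ?thesis using True by (simp add: w_def)
next
  case False
  assume T: "T \<subseteq> {..<n}"
  have "(-1::'k) ^ (m * card T) = (-1) ^ card T" using False by (simp add: power_mult)
  then show ?thesis using False act_u[OF T] by (simp add: w_def)
qed

definition phi0 :: "(nat set \<Rightarrow> 'g \<Rightarrow> 'k) \<Rightarrow> nat set \<Rightarrow> 'g \<Rightarrow> 'k" where
  "phi0 a = (\<lambda>R k. sgnf (card R) * a R (k + w (card R)))"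

lemma phi0_mul: "phi0 (sa_mul n \<rho> a b) = sa_mul n \<rho> (phi0 a) (phi0 b)"
proof (intro ext)
  fix R k
  define W where "W S g T = ext_wedge n (ext_basis S) (ext_act_basis n \<rho> g T) R" for S g T
  have tm: "(if g + w (card S) + (h + w (card T)) = k then phi0 a S (g + w (card S)) * phi0 b T (h + w (card T)) * W S (g + w (card S)) T else 0)
     = sgnf (card R) * (if g + h = k + w (card R) then a S g * b T h * W S g T else 0)"
    if S: "S \<subseteq> {..<n}" and T: "T \<subseteq> {..<n}" for S g T h
  proof (cases "W S g T = 0")
    case True
    then have "W S (g + w (card S)) T = 0" using act_w[OF T] by (simp add: W_def wedge_scale_r)
    then show ?thesis using True by simp
  next
    case False
    then have cR: "card R = card S + card T" using W_deg[OF S T] by (auto simp: W_def)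
    have W1: "W S (g + w (card S)) T = (-1) ^ (card S * card T) * W S g T"
      using act_w[OF T] by (simp add: W_def wedge_scale_r)
    have cond: "(g + w (card S) + (h + w (card T)) = k) = (g + h = k + w (card R))"
    proof -
      have e: "g + w (card S) + (h + w (card T)) = (g + h) + w (card R)" by (simp add: cR w_add add_ac)
      show ?thesis unfolding e by (rule add_inv_iff[OF ww2])
    qed
    show ?thesis unfolding cond W1 cR phi0_def
      by (simp add: ww ww2 sgnf_add algebra_simps)
  qed
  have "sa_mul n \<rho> (phi0 a) (phi0 b) R k = (\<Sum>S\<in>Pow {..<n}. \<Sum>g\<in>UNIV. \<Sum>T\<in>Pow {..<n}. \<Sum>h\<in>UNIV.
      if g + h = k then phi0 a S g * phi0 b T h * W S g T else 0)"
    by (simp add: sa_mul_def W_def cong: if_cong)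
  also have "\<dots> = (\<Sum>S\<in>Pow {..<n}. \<Sum>g\<in>UNIV. \<Sum>T\<in>Pow {..<n}. \<Sum>h\<in>UNIV.
      if g + w (card S) + (h + w (card T)) = k then phi0 a S (g + w (card S)) * phi0 b T (h + w (card T)) * W S (g + w (card S)) T else 0)"
    by (rule shift4)
  also have "\<dots> = (\<Sum>S\<in>Pow {..<n}. \<Sum>g\<in>UNIV. \<Sum>T\<in>Pow {..<n}. \<Sum>h\<in>UNIV.
      sgnf (card R) * (if g + h = k + w (card R) then a S g * b T h * W S g T else 0))"
    by (intro sum.cong refl tm) auto
  also have "\<dots> = phi0 (sa_mul n \<rho> a b) R k"
    by (simp add: phi0_def sa_mul_def W_def sum_distrib_left cong: if_cong)
  finally show "phi0 (sa_mul n \<rho> a b) R k = sa_mul n \<rho> (phi0 a) (phi0 b) R k" by simp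
qed

lemma sa_mul_basis_r:
  "sa_mul n \<rho> a (sa_basis Q q) = (\<lambda>R k. if Q \<subseteq> {..<n} then
      (\<Sum>S\<in>Pow {..<n}. \<Sum>g\<in>UNIV. if g + q = k then a S g * ext_wedge n (ext_basis S) (ext_act_basis n \<rho> g Q) R else 0) else 0)"
proof (intro ext)
  fix R k
  have "sa_mul n \<rho> a (sa_basis Q q) R k = (\<Sum>S\<in>Pow {..<n}. \<Sum>g\<in>UNIV.
      \<Sum>T\<in>Pow {..<n}. \<Sum>h\<in>UNIV. if T = Q \<and> h = q then
         (if g + q = k then a S g * ext_wedge n (ext_basis S) (ext_act_basis n \<rho> g Q) R else 0) else 0)"
    unfolding sa_mul_def by (intro sum.cong refl) (auto simp: sa_basis_def)
  also have "\<dots> = (if Q \<subseteq> {..<n} then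
      (\<Sum>S\<in>Pow {..<n}. \<Sum>g\<in>UNIV. if g + q = k then a S g * ext_wedge n (ext_basis S) (ext_act_basis n \<rho> g Q) R else 0) else 0)"
    by (simp add: sum2_delta)
  finally show "sa_mul n \<rho> a (sa_basis Q q) R k = (if Q \<subseteq> {..<n} then
      (\<Sum>S\<in>Pow {..<n}. \<Sum>g\<in>UNIV. if g + q = k then a S g * ext_wedge n (ext_basis S) (ext_act_basis n \<rho> g Q) R else 0) else 0)" .
qed

lemma act_empty: "ext_act_basis n \<rho> g {} = ext_basis {}"
  by (simp add: ext_act_basis_def)

lemma mul_grp_r: "sa_mul n \<rho> a (sa_grp q) = (\<lambda>R k. if R \<subseteq> {..<n} then a R (k - q) else 0)"
proof (intro ext)
  fix R k
  have "sa_mul n \<rho> a (sa_grp q) R k = (\<Sum>S\<in>Pow {..<n}. \<Sum>g\<in>UNIV. if S = R \<and> g = k - q then a S g else 0)"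
    unfolding sa_grp_def sa_mul_basis_r act_empty wedge_bb
    apply simp
    apply (intro sum.cong refl)
    apply (auto simp: eq_diff_eq)
    done
  also have "\<dots> = (if R \<subseteq> {..<n} then a R (k - q) else 0)" by (simp add: sum2_delta)
  finally show "sa_mul n \<rho> a (sa_grp q) R k = (if R \<subseteq> {..<n} then a R (k - q) else 0)" .
qed

lemma phi0_vec: "phi0 (sa_vec n x) = sa_mul n \<rho> (sa_vec n x) (sa_grp u)"
proof (intro ext)
  fix R k
  show "phi0 (sa_vec n x) R k = sa_mul n \<rho> (sa_vec n x) (sa_grp u) R k"
  proof (cases "\<exists>i<n. R = {i}")
    case True
    then obtain i where i: "i < n" "R = {i}" by blast
    have s: "(\<Sum>j<n. x j * ext_basis {j} R) = x i"
      using i by (simp add: ext_basis_def if_distrib sum.delta cong: if_cong)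
    have "(k + u = 0) = (k - u = 0)" using uu by (metis add_diff_cancel diff_add_cancel add.commute add_inv_iff)
    then show ?thesis using i s by (simp add: phi0_def mul_grp_r sa_vec_def w_def)
  next
    case False
    then have s: "(\<Sum>j<n. x j * ext_basis {j} R) = 0"
      by (intro sum.neutral) (auto simp: ext_basis_def)
    show ?thesis using s by (simp add: phi0_def mul_grp_r sa_vec_def)
  qed
qed

lemma phi0_basis: "phi0 (sa_basis S g) = (\<lambda>R k. if R = S \<and> k + w (card S) = g then sgnf (card S) else 0)"
  by (rule ext)+ (auto simp: phi0_def sa_basis_def)

lemma phi0_grp: "phi0 (sa_grp g) = sa_grp g"
  unfolding phi0_basis sa_grp_def by (rule ext)+ (auto simp: w_def sa_basis_def)

lemma phi0_one: "phi0 sa_one = sa_one"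
  using phi0_grp[of 0] by (simp add: sa_one_def sa_grp_def)

lemma phi0_phi0: "phi0 (phi0 a) = a"
  by (simp add: phi0_def ww mult.assoc[symmetric] sgnf_sq)

lemma phi0_carrier: "a \<in> sa_carrier n \<Longrightarrow> phi0 a \<in> sa_carrier n"
  by (simp add: sa_carrier_def phi0_def)

lemma phi0_add: "phi0 (sa_add a b) = sa_add (phi0 a) (phi0 b)"
  by (simp add: phi0_def sa_add_def algebra_simps)

lemma phi0_smul: "phi0 (sa_smul c a) = sa_smul c (phi0 a)"
  by (simp add: phi0_def sa_smul_def algebra_simps)

lemma phi0_eps: "sa_eps (phi0 a) = sa_eps a"
  by (simp add: phi0_def sa_eps_def w_def)

lemma phi0_hom: "sa_alg_hom n \<rho> phi0"
  unfolding sa_alg_hom_def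
  by (simp add: phi0_carrier phi0_add phi0_smul phi0_mul phi0_one)

lemma vec_ind: "i < n \<Longrightarrow> sa_vec n (\<lambda>j. if j = i then 1 else 0) = (sa_basis {i} 0 :: nat set \<Rightarrow> 'g \<Rightarrow> 'k)"
proof (intro ext)
  fix S g assume i: "i < n"
  have "(\<Sum>j<n. (if j = i then 1 else 0) * ext_basis {j} S) = (\<Sum>j<n. if j = i then ext_basis {j} S else (0::'k))"
    by (rule sum.cong) auto
  also have "\<dots> = ext_basis {i} S" using i by (simp add: sum.delta)
  finally show "sa_vec n (\<lambda>j. if j = i then 1 else 0) S g = (sa_basis {i} 0 S g :: 'k)"
    by (auto simp: sa_vec_def sa_basis_def ext_basis_def)
qed

lemma basis_carrier: "S \<subseteq> {..<n} \<Longrightarrow> (sa_basis S g :: nat set \<Rightarrow> 'g \<Rightarrow> 'k) \<in> sa_carrier n"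
  by (auto simp: sa_carrier_def sa_basis_def)

lemma mul_ib:
  assumes i: "i < n" and T: "T \<subseteq> {..<n}" and m: "\<forall>j\<in>T. i < j"
  shows "sa_mul n \<rho> (sa_basis {i} 0) (sa_basis T g) = (sa_basis (insert i T) g :: nat set \<Rightarrow> 'g \<Rightarrow> 'k)"
proof (intro ext)
  fix R k
  have it: "i \<notin> T" using m by auto
  have sg: "(ext_sign {i} T :: 'k) = 1"
    using sign_insert_l[of i T "{}"] it m by simp
  have "sa_mul n \<rho> (sa_basis {i} 0) (sa_basis T g) R k
     = (\<Sum>S\<in>Pow {..<n}. \<Sum>g'\<in>UNIV. if g' + g = k then sa_basis {i} 0 S g' * ext_wedge n (ext_basis S) (ext_act_basis n \<rho> g' T) R else 0)"
    using T by (simp add: sa_mul_basis_r)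
  also have "\<dots> = (\<Sum>S\<in>Pow {..<n}. \<Sum>g'\<in>(UNIV::'g set). if S = {i} \<and> g' = 0 then (if g = k \<and> R = insert i T then 1 else 0) else 0)"
  proof (rule sum.cong[OF refl], rule sum.cong[OF refl])
    fix S g' assume "S \<in> Pow {..<n}"
    show "(if g' + g = k then sa_basis {i} 0 S g' * ext_wedge n (ext_basis S) (ext_act_basis n \<rho> g' T) R else 0)
       = (if S = {i} \<and> g' = 0 then (if g = k \<and> R = insert i T then 1 else 0) else (0::'k))"
      using T i sg by (auto simp: sa_basis_def act_0 wedge_bb)
  qed
  also have "\<dots> = sa_basis (insert i T) g R k" using i by (simp add: sum2_delta sa_basis_def)
  finally show "sa_mul n \<rho> (sa_basis {i} 0) (sa_basis T g) R k = sa_basis (insert i T) g R k" .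
qed

lemma uniq_basis:
  assumes hom: "sa_alg_hom n \<rho> \<phi>"
    and vec: "\<forall>x. \<phi> (sa_vec n x) = sa_mul n \<rho> (sa_vec n x) (sa_grp u)"
    and grp: "\<forall>g. \<phi> (sa_grp g) = sa_grp g"
    and S: "S \<subseteq> {..<n}"
  shows "\<phi> (sa_basis S g) = phi0 (sa_basis S g)"
proof -
  have "finite S" using S finite_subset by blast
  then show ?thesis using S
  proof (induction S rule: finite_linorder_min_induct)
    case empty
    then show ?case using grp phi0_grp[of g] by (simp add: sa_grp_def)
  next
    case (insert b A)
    have b: "b < n" and A: "A \<subseteq> {..<n}" using insert by auto
    have e: "sa_basis (insert b A) g = sa_mul n \<rho> (sa_basis {b} 0) (sa_basis A g)"
      using mul_ib[OF b A] insert by simp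
    have v: "\<phi> (sa_basis {b} 0) = phi0 (sa_basis {b} 0)"
      using vec phi0_vec vec_ind[OF b] by metis
    have "\<phi> (sa_basis (insert b A) g) = sa_mul n \<rho> (\<phi> (sa_basis {b} 0)) (\<phi> (sa_basis A g))"
      unfolding e using hom basis_carrier[of "{b}"] basis_carrier[OF A] b
      by (simp add: sa_alg_hom_def)
    also have "\<dots> = phi0 (sa_basis (insert b A) g)"
      unfolding v insert.IH[OF A] e phi0_mul ..
    finally show ?case .
  qed
qed

definition restr :: "(nat set \<times> 'g) set \<Rightarrow> (nat set \<Rightarrow> 'g \<Rightarrow> 'k) \<Rightarrow> nat set \<Rightarrow> 'g \<Rightarrow> 'k" where
  "restr X a = (\<lambda>S g. if (S, g) \<in> X then a S g else 0)"

lemma lin_ext: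
  fixes \<phi> \<psi> :: "(nat set \<Rightarrow> 'g \<Rightarrow> 'k) \<Rightarrow> nat set \<Rightarrow> 'g \<Rightarrow> 'k" and a :: "nat set \<Rightarrow> 'g \<Rightarrow> 'k"
  assumes add: "\<forall>a\<in>sa_carrier n. \<forall>b\<in>sa_carrier n. \<phi> (sa_add a b) = sa_add (\<phi> a) (\<phi> b)"
    and smul: "\<forall>c. \<forall>a\<in>sa_carrier n. \<phi> (sa_smul c a) = sa_smul c (\<phi> a)"
    and add': "\<forall>a\<in>sa_carrier n. \<forall>b\<in>sa_carrier n. \<psi> (sa_add a b) = sa_add (\<psi> a) (\<psi> b)"
    and smul': "\<forall>c. \<forall>a\<in>sa_carrier n. \<psi> (sa_smul c a) = sa_smul c (\<psi> a)"
    and bas: "\<And>S g. S \<subseteq> {..<n} \<Longrightarrow> \<phi> (sa_basis S g) = \<psi> (sa_basis S g)"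
    and a: "a \<in> sa_carrier n"
  shows "\<phi> a = \<psi> a"
proof -
  have rc: "restr X a \<in> sa_carrier n" for X using a by (auto simp: sa_carrier_def restr_def)
  have "finite X \<Longrightarrow> X \<subseteq> Pow {..<n} \<times> UNIV \<Longrightarrow> \<phi> (restr X a) = \<psi> (restr X a)" for X
  proof (induction X rule: finite_induct)
    case empty
    have e: "restr {} a = sa_smul 0 (sa_basis {} 0)" by (rule ext)+ (simp add: restr_def sa_smul_def)
    show ?case unfolding e using smul smul' bas[of "{}" 0] basis_carrier[of "{}" 0] by simp
  next
    case (insert x X)
    obtain S g where x: "x = (S, g)" by fastforce
    have S: "S \<subseteq> {..<n}" using insert x by auto
    have e: "restr (insert x X) a = sa_add (restr X a) (sa_smul (a S g) (sa_basis S g))"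
      using insert(2) x by (intro ext) (auto simp: restr_def sa_add_def sa_smul_def sa_basis_def)
    have sc: "sa_smul (a S g) (sa_basis S g) \<in> sa_carrier n"
      using S by (auto simp: sa_carrier_def sa_smul_def sa_basis_def)
    show ?case unfolding e using add add' rc sc smul smul' basis_carrier[OF S] bas[OF S] insert by simp
  qed
  moreover have "restr (Pow {..<n} \<times> UNIV) a = a"
    using a by (intro ext) (auto simp: restr_def sa_carrier_def)
  ultimately show ?thesis by (metis finite_Pow_iff finite_lessThan finite_SigmaI finite_UNIV order_refl)
qed

lemma sum4_cand:
  fixes f :: "nat set \<Rightarrow> 'g \<Rightarrow> nat set \<Rightarrow> 'g \<Rightarrow> 'k"
  assumes "\<And>Q1 q1 Q2 q2. f Q1 q1 Q2 q2 \<noteq> 0 \<Longrightarrow> Q1 = a \<and> q1 = b \<and> Q2 = c \<and> q2 = d"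
  shows "(\<Sum>Q1\<in>Pow {..<n}. \<Sum>q1\<in>UNIV. \<Sum>Q2\<in>Pow {..<n}. \<Sum>q2\<in>UNIV. f Q1 q1 Q2 q2)
     = (if a \<subseteq> {..<n} \<and> c \<subseteq> {..<n} then f a b c d else 0)"
proof -
  have "(\<Sum>Q1\<in>Pow {..<n}. \<Sum>q1\<in>UNIV. \<Sum>Q2\<in>Pow {..<n}. \<Sum>q2\<in>UNIV. f Q1 q1 Q2 q2)
     = (\<Sum>Q1\<in>Pow {..<n}. \<Sum>q1\<in>UNIV. \<Sum>Q2\<in>Pow {..<n}. \<Sum>q2\<in>(UNIV::'g set).
          if Q1 = a \<and> q1 = b \<and> Q2 = c \<and> q2 = d then f a b c d else 0)"
    by (intro sum.cong refl) (metis assms)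
  also have "\<dots> = (\<Sum>Q1\<in>Pow {..<n}. \<Sum>q1\<in>(UNIV::'g set). if Q1 = a \<and> q1 = b then
          (if c \<subseteq> {..<n} then f a b c d else 0) else 0)"
  proof (rule sum.cong[OF refl], rule sum.cong[OF refl])
    fix Q1 q1
    show "(\<Sum>Q2\<in>Pow {..<n}. \<Sum>q2\<in>(UNIV::'g set).
          if Q1 = a \<and> q1 = b \<and> Q2 = c \<and> q2 = d then f a b c d else 0) =
          (if Q1 = a \<and> q1 = b then (if c \<subseteq> {..<n} then f a b c d else 0) else 0)"
    proof (cases "Q1 = a \<and> q1 = b")
      case False
      have "(\<Sum>Q2\<in>Pow {..<n}. \<Sum>q2\<in>(UNIV::'g set).
          if Q1 = a \<and> q1 = b \<and> Q2 = c \<and> q2 = d then f a b c d else 0) = 0"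
        using False by (intro sum.neutral ballI) auto
      then show ?thesis using False by auto
    qed (simp add: sum2_delta)
  qed
  also have "\<dots> = (if a \<subseteq> {..<n} \<and> c \<subseteq> {..<n} then f a b c d else 0)"
    by (simp add: sum2_delta)
  finally show ?thesis .
qed

abbreviation M :: "nat set \<Rightarrow> 'g \<Rightarrow> nat set \<Rightarrow> 'g \<Rightarrow> nat set \<Rightarrow> 'g \<Rightarrow> 'k" where
  "M P p Q q \<equiv> sa_mul n \<rho> (sa_basis P p) (sa_basis Q q)"

lemma M_bb: "M P p Q q = (\<lambda>R k. if P \<subseteq> {..<n} \<and> Q \<subseteq> {..<n} \<and> p + q = k then ext_wedge n (ext_basis P) (ext_act_basis n \<rho> p Q) R else 0)"
proof (intro ext)
  fix R k
  have "M P p Q q R k = (if Q \<subseteq> {..<n} then (\<Sum>S\<in>Pow {..<n}. \<Sum>g\<in>(UNIV::'g set). if S = P \<and> g = p then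
     (if p + q = k then ext_wedge n (ext_basis P) (ext_act_basis n \<rho> p Q) R else 0) else 0) else 0)"
  proof (cases "Q \<subseteq> {..<n}")
    case True
    have "(\<Sum>S\<in>Pow {..<n}. \<Sum>g\<in>(UNIV::'g set). if g + q = k then sa_basis P p S g * ext_wedge n (ext_basis S) (ext_act_basis n \<rho> g Q) R else 0)
       = (\<Sum>S\<in>Pow {..<n}. \<Sum>g\<in>(UNIV::'g set). if S = P \<and> g = p then
     (if p + q = k then ext_wedge n (ext_basis P) (ext_act_basis n \<rho> p Q) R else 0) else 0)"
    proof (rule sum.cong[OF refl], rule sum.cong[OF refl])
      fix S g
      show "(if g + q = k then sa_basis P p S g * ext_wedge n (ext_basis S) (ext_act_basis n \<rho> g Q) R else 0)
        = (if S = P \<and> g = p then (if p + q = k then ext_wedge n (ext_basis P) (ext_act_basis n \<rho> p Q) R else 0) else 0)"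
        by (auto simp: sa_basis_def)
    qed
    then show ?thesis using True by (simp add: sa_mul_basis_r)
  qed (simp add: sa_mul_basis_r)
  then show "M P p Q q R k = (if P \<subseteq> {..<n} \<and> Q \<subseteq> {..<n} \<and> p + q = k then ext_wedge n (ext_basis P) (ext_act_basis n \<rho> p Q) R else 0)"
    by (simp add: sum2_delta)
qed

lemma M_0: "M P 0 Q q = (\<lambda>R k. if P \<subseteq> {..<n} \<and> Q \<subseteq> {..<n} \<and> q = k \<and> P \<union> Q = R then ext_sign P Q else 0)"
  by (rule ext)+ (auto simp: M_bb act_0 wedge_bb)

lemma M_u: "M P u Q q = (\<lambda>R k. if P \<subseteq> {..<n} \<and> Q \<subseteq> {..<n} \<and> u + q = k \<and> P \<union> Q = R then (-1) ^ card Q * ext_sign P Q else 0)"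
  by (rule ext)+ (auto simp: M_bb act_uu wedge_scale_r wedge_bb)

lemma M_e: "M P p {} q = (\<lambda>R k. if P \<subseteq> {..<n} \<and> p + q = k \<and> P = R then 1 else 0)"
  by (rule ext)+ (auto simp: M_bb act_empty wedge_bb)

lemma sa2_pt_l:
  "sa2_mul n \<rho> (sa_tensor (sa_basis P1 p1) (sa_basis P2 p2)) Y = (\<lambda>S1 g1 S2 g2.
     if P1 \<subseteq> {..<n} \<and> P2 \<subseteq> {..<n} then
     (\<Sum>Q1\<in>Pow {..<n}. \<Sum>q1\<in>UNIV. \<Sum>Q2\<in>Pow {..<n}. \<Sum>q2\<in>UNIV.
        Y Q1 q1 Q2 q2 * M P1 p1 Q1 q1 S1 g1 * M P2 p2 Q2 q2 S2 g2) else 0)"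
proof (intro ext)
  fix S1 g1 S2 g2
  let ?G = "\<lambda>P1 p1 P2 p2. (\<Sum>Q1\<in>Pow {..<n}. \<Sum>q1\<in>UNIV. \<Sum>Q2\<in>Pow {..<n}. \<Sum>q2\<in>UNIV.
        Y Q1 q1 Q2 q2 * M P1 p1 Q1 q1 S1 g1 * M P2 p2 Q2 q2 S2 g2)"
  have "sa2_mul n \<rho> (sa_tensor (sa_basis P1 p1) (sa_basis P2 p2)) Y S1 g1 S2 g2
     = (\<Sum>P1'\<in>Pow {..<n}. \<Sum>p1'\<in>UNIV. \<Sum>P2'\<in>Pow {..<n}. \<Sum>p2'\<in>UNIV.
         if P1' = P1 \<and> p1' = p1 \<and> P2' = P2 \<and> p2' = p2 then ?G P1 p1 P2 p2 else 0)"
    unfolding sa2_mul_def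
    by (intro sum.cong refl) (auto simp: sa_tensor_def sa_basis_def)
  also have "\<dots> = (if P1 \<subseteq> {..<n} \<and> P2 \<subseteq> {..<n} then ?G P1 p1 P2 p2 else 0)"
    apply (rule trans[OF sum4_cand[where f="\<lambda>P1' p1' P2' p2'. if P1' = P1 \<and> p1' = p1 \<and> P2' = P2 \<and> p2' = p2 then ?G P1 p1 P2 p2 else 0" and a=P1 and b=p1 and c=P2 and d=p2]])
     apply (auto split: if_splits)
    done
  finally show "sa2_mul n \<rho> (sa_tensor (sa_basis P1 p1) (sa_basis P2 p2)) Y S1 g1 S2 g2
     = (if P1 \<subseteq> {..<n} \<and> P2 \<subseteq> {..<n} then ?G P1 p1 P2 p2 else 0)" .
qed

lemma sa2_pt_r:
  "sa2_mul n \<rho> X (sa_tensor (sa_basis Q1 q1) (sa_basis Q2 q2)) = (\<lambda>S1 g1 S2 g2.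
     if Q1 \<subseteq> {..<n} \<and> Q2 \<subseteq> {..<n} then
     (\<Sum>P1\<in>Pow {..<n}. \<Sum>p1\<in>UNIV. \<Sum>P2\<in>Pow {..<n}. \<Sum>p2\<in>UNIV.
        X P1 p1 P2 p2 * M P1 p1 Q1 q1 S1 g1 * M P2 p2 Q2 q2 S2 g2) else 0)"
proof (intro ext)
  fix S1 g1 S2 g2
  have "sa2_mul n \<rho> X (sa_tensor (sa_basis Q1 q1) (sa_basis Q2 q2)) S1 g1 S2 g2
     = (\<Sum>P1\<in>Pow {..<n}. \<Sum>p1\<in>UNIV. \<Sum>P2\<in>Pow {..<n}. \<Sum>p2\<in>UNIV.
        if Q1 \<subseteq> {..<n} \<and> Q2 \<subseteq> {..<n} then X P1 p1 P2 p2 * M P1 p1 Q1 q1 S1 g1 * M P2 p2 Q2 q2 S2 g2 else 0)"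
    unfolding sa2_mul_def
  proof (intro sum.cong refl)
    fix P1 p1 P2 p2
    show "(\<Sum>Q1'\<in>Pow {..<n}. \<Sum>q1'\<in>UNIV. \<Sum>Q2'\<in>Pow {..<n}. \<Sum>q2'\<in>UNIV.
            X P1 p1 P2 p2 * sa_tensor (sa_basis Q1 q1) (sa_basis Q2 q2) Q1' q1' Q2' q2' *
            M P1 p1 Q1' q1' S1 g1 * M P2 p2 Q2' q2' S2 g2) =
          (if Q1 \<subseteq> {..<n} \<and> Q2 \<subseteq> {..<n} then X P1 p1 P2 p2 * M P1 p1 Q1 q1 S1 g1 * M P2 p2 Q2 q2 S2 g2 else 0)"
      by (subst sum4_cand[where a=Q1 and b=q1 and c=Q2 and d=q2]) (auto simp: sa_tensor_def sa_basis_app split: if_splits)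
  qed
  then show "sa2_mul n \<rho> X (sa_tensor (sa_basis Q1 q1) (sa_basis Q2 q2)) S1 g1 S2 g2
     = (if Q1 \<subseteq> {..<n} \<and> Q2 \<subseteq> {..<n} then
     (\<Sum>P1\<in>Pow {..<n}. \<Sum>p1\<in>UNIV. \<Sum>P2\<in>Pow {..<n}. \<Sum>p2\<in>UNIV.
        X P1 p1 P2 p2 * M P1 p1 Q1 q1 S1 g1 * M P2 p2 Q2 q2 S2 g2) else 0)" by (simp only: sum_if_out)
qed

lemma sa2_add_l:
  "sa2_mul n \<rho> (\<lambda>A a B b. X1 A a B b + X2 A a B b) Y
   = (\<lambda>A a B b. sa2_mul n \<rho> X1 Y A a B b + sa2_mul n \<rho> X2 Y A a B b)"
  unfolding sa2_mul_def by (simp add: sum.distrib distrib_right)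

definition E :: "nat set \<Rightarrow> nat set \<Rightarrow> 'g \<Rightarrow> nat set \<Rightarrow> 'g \<Rightarrow> 'k" where
  "E T = (\<lambda>A a B b. if A \<union> B = T \<and> A \<inter> B = {} \<and> a = w (card B) \<and> b = 0 then ext_sign A B else 0)"

lemma E_empty: "sa_tensor sa_one sa_one = E {}"
  by (rule ext)+ (auto simp: E_def sa_tensor_def sa_one_def sa_basis_def w_def)

lemma Dgen: "x < n \<Longrightarrow> (sa_Delta_gen n u x :: nat set \<Rightarrow> 'g \<Rightarrow> nat set \<Rightarrow> 'g \<Rightarrow> 'k) = (\<lambda>A a B b.
   sa_tensor (sa_basis {x} 0) (sa_basis {} 0) A a B b + sa_tensor (sa_basis {} u) (sa_basis {x} 0) A a B b)"
proof -
  assume x: "x < n"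
  show ?thesis unfolding sa_Delta_gen_def vec_ind[OF x] by (simp add: sa_one_def sa_grp_def)
qed

lemma E_nz: "E T A a B b \<noteq> 0 \<Longrightarrow> A \<union> B = T \<and> A \<inter> B = {} \<and> a = w (card B) \<and> b = 0"
  by (auto simp: E_def split: if_splits)

lemma F1_val:
  assumes x: "x < n"
  shows "(\<Sum>Q1\<in>Pow {..<n}. \<Sum>q1\<in>UNIV. \<Sum>Q2\<in>Pow {..<n}. \<Sum>q2\<in>UNIV.
        E T Q1 q1 Q2 q2 * M {x} 0 Q1 q1 S1 g1 * M {} 0 Q2 q2 S2 g2)
     = (if S1 - {x} \<subseteq> {..<n} \<and> S2 \<subseteq> {..<n} then
          E T (S1 - {x}) g1 S2 g2 * M {x} 0 (S1 - {x}) g1 S1 g1 * M {} 0 S2 g2 S2 g2 else 0)"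
proof (rule sum4_cand)
  fix Q1 q1 Q2 q2
  assume nz: "E T Q1 q1 Q2 q2 * M {x} 0 Q1 q1 S1 g1 * M {} 0 Q2 q2 S2 g2 \<noteq> 0"
  then have m1: "M {x} 0 Q1 q1 S1 g1 \<noteq> 0" and m2: "M {} 0 Q2 q2 S2 g2 \<noteq> 0" by auto
  from m1 have a: "q1 = g1" "insert x Q1 = S1" "(ext_sign {x} Q1::'k) \<noteq> 0"
    by (auto simp: M_0 split: if_splits)
  from a(3) have "x \<notin> Q1" by (auto simp: sign_nz_iff)
  with a(2) have "Q1 = S1 - {x}" by auto
  moreover from m2 have "q2 = g2" "Q2 = S2" by (auto simp: M_0 split: if_splits)
  ultimately show "Q1 = S1 - {x} \<and> q1 = g1 \<and> Q2 = S2 \<and> q2 = g2" using a by simp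
qed

lemma F2_val:
  assumes x: "x < n"
  shows "(\<Sum>Q1\<in>Pow {..<n}. \<Sum>q1\<in>UNIV. \<Sum>Q2\<in>Pow {..<n}. \<Sum>q2\<in>UNIV.
        E T Q1 q1 Q2 q2 * M {} u Q1 q1 S1 g1 * M {x} 0 Q2 q2 S2 g2)
     = (if S1 \<subseteq> {..<n} \<and> S2 - {x} \<subseteq> {..<n} then
          E T S1 (g1 - u) (S2 - {x}) g2 * M {} u S1 (g1 - u) S1 g1 * M {x} 0 (S2 - {x}) g2 S2 g2 else 0)"
proof (rule sum4_cand)
  fix Q1 q1 Q2 q2
  assume nz: "E T Q1 q1 Q2 q2 * M {} u Q1 q1 S1 g1 * M {x} 0 Q2 q2 S2 g2 \<noteq> 0"
  then have m1: "M {} u Q1 q1 S1 g1 \<noteq> 0" and m2: "M {x} 0 Q2 q2 S2 g2 \<noteq> 0" by auto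
  from m1 have "u + q1 = g1" "Q1 = S1" by (auto simp: M_u split: if_splits)
  then have a: "q1 = g1 - u" "Q1 = S1" by (auto simp: algebra_simps)
  from m2 have b: "q2 = g2" "insert x Q2 = S2" "(ext_sign {x} Q2::'k) \<noteq> 0"
    by (auto simp: M_0 split: if_splits)
  from b(3) have "x \<notin> Q2" by (auto simp: sign_nz_iff)
  with b(2) have "Q2 = S2 - {x}" by auto
  then show "Q1 = S1 \<and> q1 = g1 - u \<and> Q2 = S2 - {x} \<and> q2 = g2" using a b by simp
qed

lemma w_diff: "finite S \<Longrightarrow> x \<in> S \<Longrightarrow> (g - u = w (card (S - {x}))) = (g = w (card S))"
proof -
  assume f: "finite S" and x: "x \<in> S"
  have "card S = Suc (card (S - {x}))" using card_Suc_Diff1[OF f x] by simp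
  then have "w (card S) = w (card (S - {x})) + u" by (simp add: w_Suc)
  then show ?thesis by (auto simp: algebra_simps)
qed

lemma E_step:
  assumes x: "x < n" and T: "T \<subseteq> {..<n}" and m: "\<forall>j\<in>T. x < j"
  shows "sa2_mul n \<rho> (sa_Delta_gen n u x) (E T) = E (insert x T)"
proof (intro ext)
  fix S1 g1 S2 g2
  have xT: "x \<notin> T" using m by auto
  have fT: "finite T" using T finite_subset by blast
  define V1 where "V1 = (if S1 - {x} \<subseteq> {..<n} \<and> S2 \<subseteq> {..<n} \<and> x \<in> S1 then E T (S1 - {x}) g1 S2 g2 * ext_sign {x} (S1 - {x}) else 0)"
  define V2 where "V2 = (if S1 \<subseteq> {..<n} \<and> S2 - {x} \<subseteq> {..<n} \<and> x \<in> S2 then E T S1 (g1 - u) (S2 - {x}) g2 * ((-1) ^ card S1 * ext_sign {x} (S2 - {x})) else 0)"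
  have tot: "sa2_mul n \<rho> (sa_Delta_gen n u x) (E T) S1 g1 S2 g2 = V1 + V2"
    unfolding Dgen[OF x] sa2_add_l sa2_pt_l F1_val[OF x] F2_val[OF x] V1_def V2_def
    using x by (auto simp: M_0 M_u insert_absorb)
  have LHS: "E (insert x T) S1 g1 S2 g2 = (if S1 \<union> S2 = insert x T \<and> S1 \<inter> S2 = {} \<and> g1 = w (card S2) \<and> g2 = 0 then ext_sign S1 S2 else 0)"
    by (simp add: E_def)
  show "sa2_mul n \<rho> (sa_Delta_gen n u x) (E T) S1 g1 S2 g2 = E (insert x T) S1 g1 S2 g2"
  proof (cases "x \<in> S1")
    case x1: True
    show ?thesis
    proof (cases "x \<in> S2")
      case True
      have "V1 = 0" using True xT by (auto simp: V1_def E_def)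
      moreover have "V2 = 0" using x1 xT by (auto simp: V2_def E_def)
      ultimately show ?thesis using tot LHS True x1 by auto
    next
      case x2: False
      have "V2 = 0" using x2 by (simp add: V2_def)
      moreover have "V1 = E (insert x T) S1 g1 S2 g2"
      proof (cases "S1 \<union> S2 = insert x T \<and> S1 \<inter> S2 = {} \<and> g1 = w (card S2) \<and> g2 = 0")
        case C: True
        have sub: "S1 - {x} \<subseteq> T" "S2 \<subseteq> T" using C x2 by auto
        have s1: "(ext_sign {x} (S1 - {x}) :: 'k) = 1"
          using sign_insert_l[of x "S1 - {x}" "{}"] sub m by auto
        have s2: "(ext_sign S1 S2 :: 'k) = ext_sign (S1 - {x}) S2"
          using sign_insert_l[of x S2 "S1 - {x}"] sub m x2 x1 by (auto simp: insert_absorb)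
        have eT: "E T (S1 - {x}) g1 S2 g2 = ext_sign (S1 - {x}) S2"
          using C x2 xT by (auto simp: E_def)
        show ?thesis unfolding V1_def LHS eT using C sub T s1 s2 x1 by auto
      next
        case C: False
        have eT: "E T (S1 - {x}) g1 S2 g2 = 0"
          using C x1 x2 xT by (auto simp: E_def)
        show ?thesis unfolding V1_def LHS eT using C by auto
      qed
      ultimately show ?thesis using tot by simp
    qed
  next
    case x1: False
    show ?thesis
    proof (cases "x \<in> S2")
      case x2: True
      have "V1 = 0" using x1 by (simp add: V1_def)
      moreover have "V2 = E (insert x T) S1 g1 S2 g2"
      proof (cases "S1 \<union> S2 = insert x T \<and> S1 \<inter> S2 = {} \<and> g1 = w (card S2) \<and> g2 = 0")
        case C: True
        have sub: "S1 \<subseteq> T" "S2 - {x} \<subseteq> T" using C x1 by auto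
        have fin: "finite S1" "finite S2" "finite (S2 - {x})" using C fT by (auto intro: finite_subset)
        have s1: "(ext_sign {x} (S2 - {x}) :: 'k) = 1"
          using sign_insert_l[of x "S2 - {x}" "{}"] sub m by auto
        have s2: "(ext_sign S1 S2 :: 'k) = (-1) ^ card S1 * ext_sign S1 (S2 - {x})"
          using sign_insert_r[of x S1 "S2 - {x}"] sub m x2 x1 fin by (auto simp: insert_absorb)
        have eT: "E T S1 (g1 - u) (S2 - {x}) g2 = ext_sign S1 (S2 - {x})"
          using C x1 xT w_diff[OF fin(2) x2, of g1] by (auto simp: E_def)
        show ?thesis unfolding V2_def LHS eT using C sub T s1 s2 x2 by auto
      next
        case C: False
        have "E T S1 (g1 - u) (S2 - {x}) g2 = 0"
        proof (rule ccontr)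
          assume "E T S1 (g1 - u) (S2 - {x}) g2 \<noteq> 0"
          from E_nz[OF this] have c: "S1 \<union> (S2 - {x}) = T" "S1 \<inter> (S2 - {x}) = {}"
            "g1 - u = w (card (S2 - {x}))" "g2 = 0" by auto
          have "finite S2" using c(1) fT by (metis finite_Diff2 finite_Un finite.emptyI finite_insert)
          then have "g1 = w (card S2)" using c(3) w_diff[OF _ x2] by blast
          with c C x1 x2 show False by auto
        qed
        then show ?thesis unfolding V2_def LHS using C by auto
      qed
      ultimately show ?thesis using tot by simp
    next
      case x2: False
      have "V1 = 0" "V2 = 0" using x1 x2 by (simp_all add: V1_def V2_def)
      moreover have "S1 \<union> S2 \<noteq> insert x T" using x1 x2 by auto
      ultimately show ?thesis using tot LHS by simp
    qed
  qed
qed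

lemma E_foldr: "sorted xs \<Longrightarrow> distinct xs \<Longrightarrow> set xs \<subseteq> {..<n} \<Longrightarrow>
  foldr (\<lambda>i acc. sa2_mul n \<rho> (sa_Delta_gen n u i) acc) xs (sa_tensor sa_one sa_one) = E (set xs)"
proof (induction xs)
  case Nil then show ?case by (simp add: E_empty)
next
  case (Cons x xs)
  then have x: "x < n" and xs: "\<forall>y\<in>set xs. x < y" using le_neq_trans by auto
  show ?case using Cons E_step[OF x _ xs] by simp
qed

lemma DB: "S \<subseteq> {..<n} \<Longrightarrow> sa_Delta_basis n \<rho> u S g =
  (\<lambda>A a B b. if A \<union> B = S \<and> A \<inter> B = {} \<and> a = w (card B) + g \<and> b = g then (ext_sign A B :: 'k) else 0)"
proof (intro ext)
  fix A a B b assume S: "S \<subseteq> {..<n}"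
  have fS: "finite S" using S finite_subset by blast
  have ef: "foldr (\<lambda>i acc. sa2_mul n \<rho> (sa_Delta_gen n u i) acc) (sorted_list_of_set S) (sa_tensor sa_one sa_one) = E S"
    using E_foldr[of "sorted_list_of_set S"] fS S by simp
  have "sa_Delta_basis n \<rho> u S g A a B b = (\<Sum>P1\<in>Pow {..<n}. \<Sum>p1\<in>UNIV. \<Sum>P2\<in>Pow {..<n}. \<Sum>p2\<in>UNIV.
        E S P1 p1 P2 p2 * M P1 p1 {} g A a * M P2 p2 {} g B b)"
    unfolding sa_Delta_basis_def ef sa_grp_def sa2_pt_r by simp
  also have "\<dots> = (if A \<subseteq> {..<n} \<and> B \<subseteq> {..<n} then E S A (a - g) B (b - g) * M A (a - g) {} g A a * M B (b - g) {} g B b else 0)"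
    by (rule sum4_cand) (auto simp: M_e algebra_simps split: if_splits)
  also have "\<dots> = (if A \<union> B = S \<and> A \<inter> B = {} \<and> a = w (card B) + g \<and> b = g then ext_sign A B else 0)"
    using S by (auto simp: M_e E_def algebra_simps)
  finally show "sa_Delta_basis n \<rho> u S g A a B b = (if A \<union> B = S \<and> A \<inter> B = {} \<and> a = w (card B) + g \<and> b = g then ext_sign A B else 0)" .
qed

lemma phi0_Delta: "sa_Delta_cop n \<rho> u (phi0 a) = sa_map2 n phi0 (sa_Delta n \<rho> u a)"
proof (intro ext)
  fix S1 g1 S2 g2
  define D where "D S g = (sa_Delta_basis n \<rho> u S g :: nat set \<Rightarrow> 'g \<Rightarrow> nat set \<Rightarrow> 'g \<Rightarrow> 'k)" for S g
  let ?C = "S1 \<subseteq> {..<n} \<and> S2 \<subseteq> {..<n}"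
  have tm: "sgnf (card S) * D S (g + w (card S)) S2 g2 S1 g1 = (if ?C then sgnf (card S1) * sgnf (card S2) * D S g S1 (g1 + w (card S1)) S2 (g2 + w (card S2)) else 0)"
    if S: "S \<subseteq> {..<n}" for S g
  proof (cases "S1 \<union> S2 = S \<and> S1 \<inter> S2 = {}")
    case False
    then show ?thesis unfolding D_def DB[OF S] by auto
  next
    case True
    have fin: "finite S1" "finite S2" using True S by (auto intro: finite_subset)
    have C: ?C using True S by auto
    have cS: "card S = card S1 + card S2" using True fin card_Un_disjoint by blast
    have wS: "w (card S) = w (card S1) + w (card S2)" by (simp add: cS w_add)
    have c1: "(g1 = w (card S1) + (g + w (card S))) \<longleftrightarrow> False" if "False" using that by simp
    have e1: "(g1 = g + w (card S)) = (g1 + w (card S1) = w (card S2) + g)"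
      unfolding add_inv_iff[OF ww2] wS by (simp add: add_ac)
    have e2: "(g2 = w (card S1) + (g + w (card S))) = (g2 + w (card S2) = g)"
    proof -
      have "w (card S1) + (g + (w (card S1) + w (card S2))) = g + w (card S2) + (w (card S1) + w (card S1))"
        by (simp add: add_ac)
      then have eq: "w (card S1) + (g + (w (card S1) + w (card S2))) = g + w (card S2)" by (simp add: ww2)
      show ?thesis unfolding add_inv_iff[OF ww2] wS eq by (rule refl)
    qed
    have sg: "(ext_sign S1 S2 :: 'k) = (-1) ^ (card S1 * card S2) * ext_sign S2 S1"
      using sign_swap2[OF _ fin] True by simp
    have u1: "S2 \<union> S1 = S" "S2 \<inter> S1 = {}" using True by auto
    have v: "sgnf (card S) * (ext_sign S2 S1::'k) = sgnf (card S1) * sgnf (card S2) * ext_sign S1 S2"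
      by (simp add: cS sgnf_add sg algebra_simps)
    show ?thesis unfolding D_def DB[OF S] e1 e2 using True C u1 v by auto
  qed
  have "sa_Delta_cop n \<rho> u (phi0 a) S1 g1 S2 g2 = (\<Sum>S\<in>Pow {..<n}. \<Sum>g\<in>UNIV. phi0 a S g * D S g S2 g2 S1 g1)"
    by (simp add: sa_Delta_cop_def sa_Delta_def D_def)
  also have "\<dots> = (\<Sum>S\<in>Pow {..<n}. \<Sum>g\<in>UNIV. phi0 a S (g + w (card S)) * D S (g + w (card S)) S2 g2 S1 g1)"
    by (rule shift2)
  also have "\<dots> = (\<Sum>S\<in>Pow {..<n}. \<Sum>g\<in>UNIV. a S g * (sgnf (card S) * D S (g + w (card S)) S2 g2 S1 g1))"
    by (simp add: phi0_def ww ww2 algebra_simps)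
  also have "\<dots> = (\<Sum>S\<in>Pow {..<n}. \<Sum>g\<in>UNIV. a S g * (if ?C then sgnf (card S1) * sgnf (card S2) * D S g S1 (g1 + w (card S1)) S2 (g2 + w (card S2)) else 0))"
    by (intro sum.cong refl) (simp add: tm)
  also have "\<dots> = (if ?C then (\<Sum>S\<in>Pow {..<n}. \<Sum>g\<in>UNIV. a S g * D S g S1 (g1 + w (card S1)) S2 (g2 + w (card S2))) * (sgnf (card S1) * sgnf (card S2)) else 0)"
  proof (cases ?C)
    case True
    then show ?thesis by (simp add: sum_distrib_left mult_ac)
  next
    case False
    show ?thesis unfolding if_not_P[OF False] by simp
  qed
  also have "\<dots> = sa_map2 n phi0 (sa_Delta n \<rho> u a) S1 g1 S2 g2"
  proof -
    have "sa_map2 n phi0 (sa_Delta n \<rho> u a) S1 g1 S2 g2 =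
      (if ?C then sa_Delta n \<rho> u a S1 (g1 + w (card S1)) S2 (g2 + w (card S2)) * phi0 (sa_basis S1 (g1 + w (card S1))) S1 g1 * phi0 (sa_basis S2 (g2 + w (card S2))) S2 g2 else 0)"
      unfolding sa_map2_def
    proof (rule sum4_cand)
      fix P p Q q
      assume nz: "sa_Delta n \<rho> u a P p Q q * phi0 (sa_basis P p) S1 g1 * phi0 (sa_basis Q q) S2 g2 \<noteq> 0"
      then have "phi0 (sa_basis P p) S1 g1 \<noteq> 0" "phi0 (sa_basis Q q) S2 g2 \<noteq> 0" by auto
      then show "P = S1 \<and> p = g1 + w (card S1) \<and> Q = S2 \<and> q = g2 + w (card S2)"
        by (auto simp: phi0_basis split: if_splits)
    qed
    then show ?thesis by (simp add: phi0_basis sa_Delta_def D_def)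
  qed
  finally show "sa_Delta_cop n \<rho> u (phi0 a) S1 g1 S2 g2 = sa_map2 n phi0 (sa_Delta n \<rho> u a) S1 g1 S2 g2" .
qed

end

theorem lemma3p1:
  fixes \<rho> :: "'g::{ab_group_add,finite} \<Rightarrow> nat \<Rightarrow> nat \<Rightarrow> 'k::field_char_0"
    and u :: 'g and n :: nat
  assumes "alg_closed_type TYPE('k)"
    and "u \<noteq> 0" and "u + u = 0"
    and "is_rep n \<rho>"
    and "\<forall>i<n. \<forall>j<n. \<rho> u i j = (if i = j then -1 else 0)"
  shows "(\<exists>\<phi>. sa_alg_hom n \<rho> \<phi>
            \<and> (\<forall>x. \<phi> (sa_vec n x) = sa_mul n \<rho> (sa_vec n x) (sa_grp u))
            \<and> (\<forall>g. \<phi> (sa_grp g) = sa_grp g))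
       \<and> (\<forall>\<phi>. sa_alg_hom n \<rho> \<phi>
            \<and> (\<forall>x. \<phi> (sa_vec n x) = sa_mul n \<rho> (sa_vec n x) (sa_grp u))
            \<and> (\<forall>g. \<phi> (sa_grp g) = sa_grp g)
          \<longrightarrow> bij_betw \<phi> (sa_carrier n) (sa_carrier n)
            \<and> (\<forall>a\<in>sa_carrier n. sa_Delta_cop n \<rho> u (\<phi> a) = sa_map2 n \<phi> (sa_Delta n \<rho> u a))
            \<and> (\<forall>a\<in>sa_carrier n. sa_eps (\<phi> a) = sa_eps a))"
proof -
  interpret SA \<rho> u n by unfold_locales (simp_all add: assms)
  have P: "sa_alg_hom n \<rho> \<phi> \<and> (\<forall>x. \<phi> (sa_vec n x) = sa_mul n \<rho> (sa_vec n x) (sa_grp u))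
            \<and> (\<forall>g. \<phi> (sa_grp g) = sa_grp g)
          \<longrightarrow> bij_betw \<phi> (sa_carrier n) (sa_carrier n)
            \<and> (\<forall>a\<in>sa_carrier n. sa_Delta_cop n \<rho> u (\<phi> a) = sa_map2 n \<phi> (sa_Delta n \<rho> u a))
            \<and> (\<forall>a\<in>sa_carrier n. sa_eps (\<phi> a) = sa_eps a)" for \<phi>
  proof (intro impI)
    assume h: "sa_alg_hom n \<rho> \<phi> \<and> (\<forall>x. \<phi> (sa_vec n x) = sa_mul n \<rho> (sa_vec n x) (sa_grp u))
            \<and> (\<forall>g. \<phi> (sa_grp g) = sa_grp g)"
    then have hom: "sa_alg_hom n \<rho> \<phi>"
      and vec: "\<forall>x. \<phi> (sa_vec n x) = sa_mul n \<rho> (sa_vec n x) (sa_grp u)"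
      and grp: "\<forall>g. \<phi> (sa_grp g) = sa_grp g" by auto
    have bas: "\<phi> (sa_basis S g) = phi0 (sa_basis S g)" if "S \<subseteq> {..<n}" for S g
      using uniq_basis[OF hom vec grp that] .
    have eq: "\<phi> a = phi0 a" if a: "a \<in> sa_carrier n" for a
      using hom phi0_hom unfolding sa_alg_hom_def
      by (intro lin_ext[where \<phi>=\<phi> and \<psi>=phi0, OF _ _ _ _ bas a]) auto
    have bij0: "bij_betw phi0 (sa_carrier n) (sa_carrier n)"
      by (rule bij_betw_byWitness[where f'=phi0]) (auto simp: phi0_phi0 phi0_carrier)
    have "bij_betw \<phi> (sa_carrier n) (sa_carrier n)"
      using bij0 bij_betw_cong[of "sa_carrier n" \<phi> phi0] eq by auto
    moreover have "sa_Delta_cop n \<rho> u (\<phi> a) = sa_map2 n \<phi> (sa_Delta n \<rho> u a)" if a: "a \<in> sa_carrier n" for a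
    proof -
      have "sa_map2 n \<phi> (sa_Delta n \<rho> u a) = sa_map2 n phi0 (sa_Delta n \<rho> u a)"
        unfolding sa_map2_def by (intro ext sum.cong refl) (auto simp: bas)
      then show ?thesis using phi0_Delta[of a] eq[OF a] by simp
    qed
    moreover have "sa_eps (\<phi> a) = sa_eps a" if a: "a \<in> sa_carrier n" for a
      using eq[OF a] phi0_eps by simp
    ultimately show "bij_betw \<phi> (sa_carrier n) (sa_carrier n)
            \<and> (\<forall>a\<in>sa_carrier n. sa_Delta_cop n \<rho> u (\<phi> a) = sa_map2 n \<phi> (sa_Delta n \<rho> u a))
            \<and> (\<forall>a\<in>sa_carrier n. sa_eps (\<phi> a) = sa_eps a)" by blast
  qed
  have "sa_alg_hom n \<rho> phi0 \<and> (\<forall>x. phi0 (sa_vec n x) = sa_mul n \<rho> (sa_vec n x) (sa_grp u))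
            \<and> (\<forall>g. phi0 (sa_grp g) = sa_grp g)"
    using phi0_hom phi0_vec phi0_grp by blast
  then show ?thesis using P by blast
qed

end
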